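(* Let $\delta$ satisfy the Kalmanson conditions with respect to $\pi=(x_1,\dots,x_n)$, let $C_1,\dots,C_m$ ($m\ge4$) be a partition of $X$ into consecutive intervals of $\pi$ in this order, and let $\mu$ be a block weighting. Then for every $1\le i$ with $i+3\le m$, \[Q_\delta(C_i,C_{i+3})-Q_\delta(C_{i+1},C_{i+2})\ge0.\]
   Context: $X=\{1,\dots,n\}$. A dissimilarity map is $\delta:X\times X\to\mathbb{R}$ with $\delta(i,j)=\delta(j,i)\ge0$, $\delta(i,i)=0$. A circular ordering is a listing $\pi=(x_1,\dots,x_n)$ of $X$ regarded cyclically. $\delta$ satisfies the Kalmanson conditions with respect to $\pi$ if for all $1\le i<j<k<l\le n$: $\delta(x_i,x_j)+\delta(x_k,x_l)\le\delta(x_i,x_k)+\delta(x_j,x_l)$ and $\delta(x_i,x_l)+\delta(x_j,x_k)\le\delta(x_i,x_k)+\delta(x_j,x_l)$. The partition into consecutive intervals means $C_1=\{x_1,\dots,x_{a_1}\}$, $C_2=\{x_{a_1+1},\dots,x_{a_2}\},\dots,C_m=\{x_{a_{m-1}+1},\dots,x_n\}$. A block weighting is $\mu:X\to\mathbb{R}_{\ge0}$ with $\sum_{x\in C_r}\mu(x)=1$ for every $r$. Set $\delta(C_r,C_s)=\sum_{x\in C_r,y\in C_s}\mu(x)\mu(y)\delta(x,y)$ and $Q_\delta(C_r,C_s)=(m-2)\delta(C_r,C_s)-\sum_{t\ne r}\delta(C_r,C_t)-\sum_{t\ne s}\delta(C_s,C_t)$. *)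

theory Defs
  imports Main "HOL.Real"
begin

definition dissimilarity :: "nat \<Rightarrow> (nat \<Rightarrow> nat \<Rightarrow> real) \<Rightarrow> bool" where
  "dissimilarity n \<delta> \<longleftrightarrow>
     (\<forall>i\<in>{1..n}. \<forall>j\<in>{1..n}. \<delta> i j = \<delta> j i \<and> \<delta> i j \<ge> 0) \<and>
     (\<forall>i\<in>{1..n}. \<delta> i i = 0)"

text \<open>A circular ordering (x_1,...,x_n) of X is given by the bijection p with p k = x_k.\<close>
definition circular_ordering :: "nat \<Rightarrow> (nat \<Rightarrow> nat) \<Rightarrow> bool" where
  "circular_ordering n p \<longleftrightarrow> bij_betw p {1..n} {1..n}"

definition kalmanson :: "nat \<Rightarrow> (nat \<Rightarrow> nat \<Rightarrow> real) \<Rightarrow> (nat \<Rightarrow> nat) \<Rightarrow> bool" where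
  "kalmanson n \<delta> p \<longleftrightarrow>
     (\<forall>i j k l. 1 \<le> i \<and> i < j \<and> j < k \<and> k < l \<and> l \<le> n \<longrightarrow>
        \<delta> (p i) (p j) + \<delta> (p k) (p l) \<le> \<delta> (p i) (p k) + \<delta> (p j) (p l) \<and>
        \<delta> (p i) (p l) + \<delta> (p j) (p k) \<le> \<delta> (p i) (p k) + \<delta> (p j) (p l))"

text \<open>Consecutive-interval partition into m blocks with boundaries a 0 = 0 < a 1 < ... < a m = n;
  block r (1 \<le> r \<le> m) is {x_{a(r-1)+1}, ..., x_{a r}}.\<close>
definition interval_partition :: "nat \<Rightarrow> nat \<Rightarrow> (nat \<Rightarrow> nat) \<Rightarrow> bool" where
  "interval_partition n m a \<longleftrightarrow> a 0 = 0 \<and> a m = n \<and> (\<forall>r<m. a r < a (Suc r))"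

definition block :: "(nat \<Rightarrow> nat) \<Rightarrow> (nat \<Rightarrow> nat) \<Rightarrow> nat \<Rightarrow> nat set" where
  "block p a r = p ` {a (r - 1) + 1 .. a r}"

definition block_weighting ::
  "nat \<Rightarrow> nat \<Rightarrow> (nat \<Rightarrow> nat) \<Rightarrow> (nat \<Rightarrow> nat) \<Rightarrow> (nat \<Rightarrow> real) \<Rightarrow> bool" where
  "block_weighting n m p a \<mu> \<longleftrightarrow>
     (\<forall>x\<in>{1..n}. \<mu> x \<ge> 0) \<and> (\<forall>r\<in>{1..m}. (\<Sum>x\<in>block p a r. \<mu> x) = 1)"

definition block_dist ::
  "(nat \<Rightarrow> nat \<Rightarrow> real) \<Rightarrow> (nat \<Rightarrow> real) \<Rightarrow> nat set \<Rightarrow> nat set \<Rightarrow> real" where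
  "block_dist \<delta> \<mu> C D = (\<Sum>x\<in>C. \<Sum>y\<in>D. \<mu> x * \<mu> y * \<delta> x y)"

definition Qdelta ::
  "nat \<Rightarrow> (nat \<Rightarrow> nat \<Rightarrow> real) \<Rightarrow> (nat \<Rightarrow> real) \<Rightarrow> (nat \<Rightarrow> nat) \<Rightarrow> (nat \<Rightarrow> nat) \<Rightarrow> nat \<Rightarrow> nat \<Rightarrow> real" where
  "Qdelta m \<delta> \<mu> p a r s =
     (real m - 2) * block_dist \<delta> \<mu> (block p a r) (block p a s)
     - (\<Sum>t\<in>{1..m} - {r}. block_dist \<delta> \<mu> (block p a r) (block p a t))
     - (\<Sum>t\<in>{1..m} - {s}. block_dist \<delta> \<mu> (block p a s) (block p a t))"

end

theory Submission
  imports Defs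
begin

definition M4 :: "(nat \<Rightarrow> real) \<Rightarrow> nat set \<Rightarrow> nat set \<Rightarrow> nat set \<Rightarrow> nat set \<Rightarrow> (nat \<Rightarrow> nat \<Rightarrow> nat \<Rightarrow> nat \<Rightarrow> real) \<Rightarrow> real" where
 "M4 f P Q R S g = (\<Sum>i\<in>P. \<Sum>j\<in>Q. \<Sum>k\<in>R. \<Sum>l\<in>S. f i * f j * f k * f l * g i j k l)"
definition Dd :: "(nat \<Rightarrow> real) \<Rightarrow> (nat \<Rightarrow> nat \<Rightarrow> real) \<Rightarrow> nat set \<Rightarrow> nat set \<Rightarrow> real" where
 "Dd f d X Y = (\<Sum>x\<in>X. \<Sum>y\<in>Y. f x * f y * d x y)"

lemma w1: "sum f X = (1::real) \<Longrightarrow> (\<Sum>x\<in>X. c * f x) = c"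
  by (simp add: sum_distrib_left[symmetric])

context fixes f :: "nat \<Rightarrow> real" and P Q R S
  assumes sP: "sum f P = 1" and sQ: "sum f Q = 1" and sR: "sum f R = 1" and sS: "sum f S = 1"
begin

lemma mij: "M4 f P Q R S (\<lambda>i j k l. d i j) = Dd f d P Q"
proof -
  have "(\<Sum>k\<in>R. \<Sum>l\<in>S. f i * f j * f k * f l * d i j) = f i * f j * d i j" for i j
  proof -
    have "(\<Sum>k\<in>R. \<Sum>l\<in>S. f i * f j * f k * f l * d i j) = (\<Sum>k\<in>R. \<Sum>l\<in>S. (f i * f j * d i j * f k) * f l)"
      by (simp add: ac_simps)
    also have "\<dots> = (\<Sum>k\<in>R. (f i * f j * d i j) * f k)" using w1[OF sS] by simp
    also have "\<dots> = f i * f j * d i j" using w1[OF sR] by simp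
    finally show ?thesis .
  qed
  then show ?thesis unfolding M4_def Dd_def by simp
qed

lemma mkl: "M4 f P Q R S (\<lambda>i j k l. d k l) = Dd f d R S"
proof -
  have "M4 f P Q R S (\<lambda>i j k l. d k l) = (\<Sum>i\<in>P. \<Sum>j\<in>Q. (Dd f d R S * f i) * f j)"
    unfolding M4_def Dd_def
    by (simp add: sum_distrib_left sum_distrib_right ac_simps)
  also have "\<dots> = Dd f d R S" using w1[OF sP] w1[OF sQ] by (simp add: sum_distrib_right[symmetric])
  finally show ?thesis .
qed

lemma mik: "M4 f P Q R S (\<lambda>i j k l. d i k) = Dd f d P R"
proof -
  have "M4 f P Q R S (\<lambda>i j k l. d i k) = (\<Sum>i\<in>P. \<Sum>j\<in>Q. \<Sum>k\<in>R. \<Sum>l\<in>S. (f i * f k * d i k * f j) * f l)"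
    unfolding M4_def by (simp add: ac_simps)
  also have "\<dots> = (\<Sum>i\<in>P. \<Sum>j\<in>Q. \<Sum>k\<in>R. (f i * f k * d i k) * f j)" by (simp only: w1[OF sS])
  also have "\<dots> = (\<Sum>i\<in>P. \<Sum>j\<in>Q. (\<Sum>k\<in>R. f i * f k * d i k) * f j)" by (simp add: sum_distrib_right)
  also have "\<dots> = (\<Sum>i\<in>P. (\<Sum>k\<in>R. f i * f k * d i k))" by (simp only: w1[OF sQ])
  finally show ?thesis unfolding Dd_def .
qed

lemma mjl: "M4 f P Q R S (\<lambda>i j k l. d j l) = Dd f d Q S"
proof -
  have "M4 f P Q R S (\<lambda>i j k l. d j l) = (\<Sum>i\<in>P. \<Sum>j\<in>Q. \<Sum>k\<in>R. \<Sum>l\<in>S. (f j * f l * d j l * f k) * f i)"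
    unfolding M4_def by (simp add: ac_simps)
  also have "\<dots> = (\<Sum>i\<in>P. (\<Sum>j\<in>Q. \<Sum>k\<in>R. \<Sum>l\<in>S. (f j * f l * d j l * f k)) * f i)" by (simp add: sum_distrib_right)
  also have "\<dots> = (\<Sum>j\<in>Q. \<Sum>k\<in>R. \<Sum>l\<in>S. (f j * f l * d j l) * f k)" by (simp only: w1[OF sP])
  also have "\<dots> = (\<Sum>j\<in>Q. \<Sum>k\<in>R. (\<Sum>l\<in>S. (f j * f l * d j l)) * f k)" by (simp add: sum_distrib_right)
  also have "\<dots> = (\<Sum>j\<in>Q. (\<Sum>l\<in>S. (f j * f l * d j l)))" by (simp only: w1[OF sR])
  finally show ?thesis unfolding Dd_def .
qed

lemma mil: "M4 f P Q R S (\<lambda>i j k l. d i l) = Dd f d P S"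
proof -
  have "M4 f P Q R S (\<lambda>i j k l. d i l) = (\<Sum>i\<in>P. \<Sum>j\<in>Q. \<Sum>k\<in>R. \<Sum>l\<in>S. (f i * f l * d i l * f k) * f j)"
    unfolding M4_def by (simp add: ac_simps)
  also have "\<dots> = (\<Sum>i\<in>P. \<Sum>j\<in>Q. (\<Sum>k\<in>R. \<Sum>l\<in>S. (f i * f l * d i l * f k)) * f j)" by (simp add: sum_distrib_right)
  also have "\<dots> = (\<Sum>i\<in>P. \<Sum>k\<in>R. \<Sum>l\<in>S. (f i * f l * d i l) * f k)" by (simp only: w1[OF sQ])
  also have "\<dots> = (\<Sum>i\<in>P. \<Sum>k\<in>R. (\<Sum>l\<in>S. (f i * f l * d i l)) * f k)" by (simp add: sum_distrib_right)
  also have "\<dots> = (\<Sum>i\<in>P. (\<Sum>l\<in>S. (f i * f l * d i l)))" by (simp only: w1[OF sR])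
  finally show ?thesis unfolding Dd_def .
qed

lemma mjk: "M4 f P Q R S (\<lambda>i j k l. d j k) = Dd f d Q R"
proof -
  have "M4 f P Q R S (\<lambda>i j k l. d j k) = (\<Sum>i\<in>P. \<Sum>j\<in>Q. \<Sum>k\<in>R. \<Sum>l\<in>S. (f j * f k * d j k * f i) * f l)"
    unfolding M4_def by (simp add: ac_simps)
  also have "\<dots> = (\<Sum>i\<in>P. \<Sum>j\<in>Q. \<Sum>k\<in>R. (f j * f k * d j k) * f i)" by (simp only: w1[OF sS])
  also have "\<dots> = (\<Sum>i\<in>P. (\<Sum>j\<in>Q. \<Sum>k\<in>R. (f j * f k * d j k)) * f i)" by (simp add: sum_distrib_right)
  also have "\<dots> = (\<Sum>j\<in>Q. \<Sum>k\<in>R. (f j * f k * d j k))" by (simp only: w1[OF sP])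
  finally show ?thesis unfolding Dd_def .
qed
end

lemma M4_add: "M4 f P Q R S (\<lambda>i j k l. g i j k l + h i j k l) = M4 f P Q R S g + M4 f P Q R S h"
  by (simp add: M4_def distrib_left sum.distrib)

lemma M4_mono:
  assumes "\<And>x. x \<in> P \<union> Q \<union> R \<union> S \<Longrightarrow> f x \<ge> 0"
    and "\<And>i j k l. i \<in> P \<Longrightarrow> j \<in> Q \<Longrightarrow> k \<in> R \<Longrightarrow> l \<in> S \<Longrightarrow> g i j k l \<le> h i j k l"
  shows "M4 f P Q R S g \<le> M4 f P Q R S h"
  unfolding M4_def
  using assms by (intro sum_mono mult_left_mono) (auto intro!: mult_nonneg_nonneg)

lemma kal1:
  fixes f :: "nat \<Rightarrow> real"
  assumes "sum f P = 1" "sum f Q = 1" "sum f R = 1" "sum f S = 1"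
    and "\<And>x. x \<in> P \<union> Q \<union> R \<union> S \<Longrightarrow> f x \<ge> 0"
    and "\<And>i j k l. i \<in> P \<Longrightarrow> j \<in> Q \<Longrightarrow> k \<in> R \<Longrightarrow> l \<in> S \<Longrightarrow> d i j + d k l \<le> d i k + d j l"
  shows "Dd f d P Q + Dd f d R S \<le> Dd f d P R + Dd f d Q S"
proof -
  have "M4 f P Q R S (\<lambda>i j k l. d i j + d k l) \<le> M4 f P Q R S (\<lambda>i j k l. d i k + d j l)"
    using assms(5,6) by (rule M4_mono)
  then show ?thesis
    by (simp only: M4_add mij[OF assms(1-4)] mkl[OF assms(1-4)] mik[OF assms(1-4)] mjl[OF assms(1-4)])
qed

lemma kal2:
  fixes f :: "nat \<Rightarrow> real"
  assumes "sum f P = 1" "sum f Q = 1" "sum f R = 1" "sum f S = 1"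
    and "\<And>x. x \<in> P \<union> Q \<union> R \<union> S \<Longrightarrow> f x \<ge> 0"
    and "\<And>i j k l. i \<in> P \<Longrightarrow> j \<in> Q \<Longrightarrow> k \<in> R \<Longrightarrow> l \<in> S \<Longrightarrow> d i l + d j k \<le> d i k + d j l"
  shows "Dd f d P S + Dd f d Q R \<le> Dd f d P R + Dd f d Q S"
proof -
  have "M4 f P Q R S (\<lambda>i j k l. d i l + d j k) \<le> M4 f P Q R S (\<lambda>i j k l. d i k + d j l)"
    using assms(5,6) by (rule M4_mono)
  then show ?thesis
    by (simp only: M4_add mil[OF assms(1-4)] mjk[OF assms(1-4)] mik[OF assms(1-4)] mjl[OF assms(1-4)])
qed

lemma split_sum:
  fixes g :: "nat \<Rightarrow> real"
  assumes "1 \<le> i" "i + 3 \<le> m" "r \<in> {i..i+3}"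
  shows "(\<Sum>t\<in>{1..m} - {r}. g t) = (\<Sum>t\<in>{1..m} - {i..i+3}. g t) + (\<Sum>t\<in>{i..i+3} - {r}. g t)"
proof -
  have "{1..m} - {r} = ({1..m} - {i..i+3}) \<union> ({i..i+3} - {r})" using assms by auto
  moreover have "({1..m} - {i..i+3}) \<inter> ({i..i+3} - {r}) = {}" by auto
  ultimately show ?thesis by (simp add: sum.union_disjoint)
qed

lemma four: "{i..i+3::nat} = {i, i+1, i+2, i+3}" by auto

lemma alg:
  fixes G :: "nat \<Rightarrow> nat \<Rightarrow> real"
  assumes sym: "\<And>r s. r \<in> {1..m} \<Longrightarrow> s \<in> {1..m} \<Longrightarrow> G r s = G s r"
    and i: "1 \<le> i" "i + 3 \<le> m"
    and key: "\<And>t. t \<in> {1..m} - {i..i+3} \<Longrightarrow>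
       G i (i+3) - G (i+1) (i+2) + G (i+1) t + G (i+2) t - G i t - G (i+3) t \<ge> 0"
  shows "((real m - 2) * G i (i+3) - (\<Sum>t\<in>{1..m} - {i}. G i t) - (\<Sum>t\<in>{1..m} - {i+3}. G (i+3) t))
       - ((real m - 2) * G (i+1) (i+2) - (\<Sum>t\<in>{1..m} - {i+1}. G (i+1) t) - (\<Sum>t\<in>{1..m} - {i+2}. G (i+2) t)) \<ge> 0"
proof -
  let ?T = "{1..m} - {i..i+3}"
  have cT: "card ?T = m - 4"
  proof -
    have "card ?T = card {1..m} - card {i..i+3}" using i by (intro card_Diff_subset) auto
    then show ?thesis by simp
  qed
  have m4: "real (m - 4) = real m - 4" using i by simp
  have s1: "G i (i+1) = G (i+1) i" "G i (i+2) = G (i+2) i" "G i (i+3) = G (i+3) i"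
     "G (i+1) (i+2) = G (i+2) (i+1)" "G (i+1) (i+3) = G (i+3) (i+1)" "G (i+2) (i+3) = G (i+3) (i+2)"
    using i by (auto intro!: sym)
  have "0 \<le> (\<Sum>t\<in>?T. G i (i+3) - G (i+1) (i+2) + G (i+1) t + G (i+2) t - G i t - G (i+3) t)"
    using key by (intro sum_nonneg) auto
  also have "\<dots> = real (m-4) * (G i (i+3) - G (i+1) (i+2)) + (\<Sum>t\<in>?T. G (i+1) t) + (\<Sum>t\<in>?T. G (i+2) t)
     - (\<Sum>t\<in>?T. G i t) - (\<Sum>t\<in>?T. G (i+3) t)"
    using cT by (simp add: sum.distrib sum_subtractf)
  finally have A: "0 \<le> \<dots>" .
  have d0: "{i..i+3} - {i} = {i+1, i+2, i+3}" "{i..i+3} - {i+1} = {i, i+2, i+3}"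
    "{i..i+3} - {i+2} = {i, i+1, i+3}" "{i..i+3} - {i+3} = {i, i+1, i+2}" by auto
  have e0: "(\<Sum>t\<in>{1..m} - {i}. G i t) = (\<Sum>t\<in>?T. G i t) + G i (i+1) + G i (i+2) + G i (i+3)"
    using split_sum[OF i, of i "G i"] unfolding d0 by simp
  have e1: "(\<Sum>t\<in>{1..m} - {i+1}. G (i+1) t) = (\<Sum>t\<in>?T. G (i+1) t) + G (i+1) i + G (i+1) (i+2) + G (i+1) (i+3)"
    using split_sum[OF i, of "i+1" "G (i+1)"] unfolding d0 by simp
  have e2: "(\<Sum>t\<in>{1..m} - {i+2}. G (i+2) t) = (\<Sum>t\<in>?T. G (i+2) t) + G (i+2) i + G (i+2) (i+1) + G (i+2) (i+3)"
    using split_sum[OF i, of "i+2" "G (i+2)"] unfolding d0 by simp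
  have e3: "(\<Sum>t\<in>{1..m} - {i+3}. G (i+3) t) = (\<Sum>t\<in>?T. G (i+3) t) + G (i+3) i + G (i+3) (i+1) + G (i+3) (i+2)"
    using split_sum[OF i, of "i+3" "G (i+3)"] unfolding d0 by simp
  show ?thesis
    unfolding e0 e1 e2 e3 using A m4 s1 by (simp add: algebra_simps)
qed


theorem mainTheorem8:
  fixes n m :: nat and \<delta> :: "nat \<Rightarrow> nat \<Rightarrow> real" and p a :: "nat \<Rightarrow> nat"
    and \<mu> :: "nat \<Rightarrow> real" and i :: nat
  assumes "dissimilarity n \<delta>"
    and "circular_ordering n p"
    and "kalmanson n \<delta> p"
    and "m \<ge> 4"
    and "interval_partition n m a"
    and "block_weighting n m p a \<mu>"
    and "1 \<le> i" and "i + 3 \<le> m"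
  shows "Qdelta m \<delta> \<mu> p a i (i + 3) - Qdelta m \<delta> \<mu> p a (i + 1) (i + 2) \<ge> 0"
proof -
  define I where "I r = {a (r - 1) + 1 .. a r}" for r
  define f where "f k = \<mu> (p k)" for k
  define d where "d k l = \<delta> (p k) (p l)" for k l
  define G where "G r s = block_dist \<delta> \<mu> (block p a r) (block p a s)" for r s
  have a0: "a 0 = 0" and am: "a m = n" and ast: "\<And>r. r < m \<Longrightarrow> a r < a (Suc r)"
    using assms(5) unfolding interval_partition_def by auto
  have amono: "a r \<le> a s" if "r \<le> s" "s \<le> m" for r s
    using that
  proof (induction s)
    case 0 then show ?case by simp
  next
    case (Suc s)
    show ?case
    proof (cases "r = Suc s")
      case False
      then have "a r \<le> a s" using Suc by simp
      also have "a s < a (Suc s)" using Suc.prems ast by simp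
      finally show ?thesis by simp
    qed simp
  qed
  have Isub: "I r \<subseteq> {1..n}" if "r \<in> {1..m}" for r
    using that amono[of r m] am unfolding I_def by auto
  have Iord: "k < l" if "r < s" "s \<le> m" "k \<in> I r" "l \<in> I s" for r s k l
  proof -
    have "a r \<le> a (s - 1)" using that by (intro amono) auto
    then show ?thesis using that unfolding I_def by auto
  qed
  have injp: "inj_on p {1..n}" using assms(2) unfolding circular_ordering_def bij_betw_def by simp
  have blk: "block p a r = p ` I r" for r unfolding block_def I_def by simp
  have GD: "G r s = Dd f d (I r) (I s)" if "r \<in> {1..m}" "s \<in> {1..m}" for r s
  proof -
    have ir: "inj_on p (I r)" and is': "inj_on p (I s)"
      using injp Isub that by (auto intro: inj_on_subset)
    show ?thesis
      unfolding G_def block_dist_def Dd_def blk f_def d_def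
      using ir is' by (simp add: sum.reindex)
  qed
  have sumI: "sum f (I r) = 1" if "r \<in> {1..m}" for r
  proof -
    have "inj_on p (I r)" using injp Isub that by (auto intro: inj_on_subset)
    moreover have "sum \<mu> (block p a r) = 1" using assms(6) that unfolding block_weighting_def by auto
    ultimately show ?thesis unfolding blk f_def by (simp add: sum.reindex)
  qed
  have fpos: "f k \<ge> 0" if "k \<in> {1..n}" for k
  proof -
    have "p k \<in> {1..n}" using assms(2) that unfolding circular_ordering_def bij_betw_def by auto
    then show ?thesis using assms(6) unfolding block_weighting_def f_def by auto
  qed
  have dsym: "d k l = d l k" if "k \<in> {1..n}" "l \<in> {1..n}" for k l
  proof -
    have "p k \<in> {1..n}" "p l \<in> {1..n}" using assms(2) that unfolding circular_ordering_def bij_betw_def by auto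
    then show ?thesis using assms(1) unfolding dissimilarity_def d_def by auto
  qed
  have Gsym: "G r s = G s r" if "r \<in> {1..m}" "s \<in> {1..m}" for r s
  proof -
    have "Dd f d (I r) (I s) = Dd f d (I s) (I r)"
      unfolding Dd_def
      apply (subst sum.swap)
      apply (intro sum.cong refl)
      using dsym Isub that by (auto simp: mult.commute subset_iff)
    then show ?thesis using GD that by simp
  qed
  have K: "d k1 k2 + d k3 k4 \<le> d k1 k3 + d k2 k4 \<and> d k1 k4 + d k2 k3 \<le> d k1 k3 + d k2 k4"
    if "1 \<le> k1" "k1 < k2" "k2 < k3" "k3 < k4" "k4 \<le> n" for k1 k2 k3 k4
    using assms(3) that unfolding kalmanson_def d_def by blast
  have KB: "G r1 r2 + G r3 r4 \<le> G r1 r3 + G r2 r4 \<and> G r1 r4 + G r2 r3 \<le> G r1 r3 + G r2 r4"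
    if "1 \<le> r1" "r1 < r2" "r2 < r3" "r3 < r4" "r4 \<le> m" for r1 r2 r3 r4
  proof -
    have mem: "r1 \<in> {1..m}" "r2 \<in> {1..m}" "r3 \<in> {1..m}" "r4 \<in> {1..m}" using that by auto
    have fp: "\<And>x. x \<in> I r1 \<union> I r2 \<union> I r3 \<union> I r4 \<Longrightarrow> f x \<ge> 0"
      using fpos Isub mem by blast
    have pt: "d k1 k2 + d k3 k4 \<le> d k1 k3 + d k2 k4 \<and> d k1 k4 + d k2 k3 \<le> d k1 k3 + d k2 k4"
      if "k1 \<in> I r1" "k2 \<in> I r2" "k3 \<in> I r3" "k4 \<in> I r4" for k1 k2 k3 k4
    proof (rule K)
      show "1 \<le> k1" using that(1) Isub[OF mem(1)] by auto
      show "k4 \<le> n" using that(4) Isub[OF mem(4)] by auto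
      show "k1 < k2" using Iord[of r1 r2] that \<open>r1 < r2\<close> \<open>r4 \<le> m\<close> \<open>r2 < r3\<close> \<open>r3 < r4\<close> by auto
      show "k2 < k3" using Iord[of r2 r3] that \<open>r4 \<le> m\<close> \<open>r2 < r3\<close> \<open>r3 < r4\<close> by auto
      show "k3 < k4" using Iord[of r3 r4] that \<open>r4 \<le> m\<close> \<open>r3 < r4\<close> by auto
    qed
    have pt1: "\<And>k1 k2 k3 k4. k1 \<in> I r1 \<Longrightarrow> k2 \<in> I r2 \<Longrightarrow> k3 \<in> I r3 \<Longrightarrow> k4 \<in> I r4 \<Longrightarrow> d k1 k2 + d k3 k4 \<le> d k1 k3 + d k2 k4"
      using pt by blast
    have pt2: "\<And>k1 k2 k3 k4. k1 \<in> I r1 \<Longrightarrow> k2 \<in> I r2 \<Longrightarrow> k3 \<in> I r3 \<Longrightarrow> k4 \<in> I r4 \<Longrightarrow> d k1 k4 + d k2 k3 \<le> d k1 k3 + d k2 k4"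
      using pt by blast
    have "Dd f d (I r1) (I r2) + Dd f d (I r3) (I r4) \<le> Dd f d (I r1) (I r3) + Dd f d (I r2) (I r4)"
      by (rule kal1[OF sumI[OF mem(1)] sumI[OF mem(2)] sumI[OF mem(3)] sumI[OF mem(4)] fp pt1])
    moreover have "Dd f d (I r1) (I r4) + Dd f d (I r2) (I r3) \<le> Dd f d (I r1) (I r3) + Dd f d (I r2) (I r4)"
      by (rule kal2[OF sumI[OF mem(1)] sumI[OF mem(2)] sumI[OF mem(3)] sumI[OF mem(4)] fp pt2])
    ultimately show ?thesis using GD mem by simp
  qed
  have key: "G i (i+3) - G (i+1) (i+2) + G (i+1) t + G (i+2) t - G i t - G (i+3) t \<ge> 0"
    if t: "t \<in> {1..m} - {i..i+3}" for t
  proof (cases "t < i")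
    case True
    have mem: "t \<in> {1..m}" "i \<in> {1..m}" "i+1 \<in> {1..m}" "i+2 \<in> {1..m}" "i+3 \<in> {1..m}"
      using t assms(7,8) by auto
    have "G t i + G (i+1) (i+3) \<le> G t (i+1) + G i (i+3)"
      using KB[of t i "i+1" "i+3"] True t assms(8) by auto
    moreover have "G t (i+3) + G (i+1) (i+2) \<le> G t (i+2) + G (i+1) (i+3)"
      using KB[of t "i+1" "i+2" "i+3"] True t assms(8) by auto
    ultimately show ?thesis using Gsym[OF mem(1)] mem by simp
  next
    case False
    then have tg: "i + 3 < t" using t by auto
    have mem: "t \<in> {1..m}" "i \<in> {1..m}" "i+1 \<in> {1..m}" "i+2 \<in> {1..m}" "i+3 \<in> {1..m}"
      using t assms(7,8) by auto
    have "G i t + G (i+1) (i+2) \<le> G i (i+2) + G (i+1) t"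
      using KB[of i "i+1" "i+2" t] tg t assms(7) by auto
    moreover have "G i (i+2) + G (i+3) t \<le> G i (i+3) + G (i+2) t"
      using KB[of i "i+2" "i+3" t] tg t assms(7) by auto
    ultimately show ?thesis by simp
  qed
  have "((real m - 2) * G i (i+3) - (\<Sum>t\<in>{1..m} - {i}. G i t) - (\<Sum>t\<in>{1..m} - {i+3}. G (i+3) t))
       - ((real m - 2) * G (i+1) (i+2) - (\<Sum>t\<in>{1..m} - {i+1}. G (i+1) t) - (\<Sum>t\<in>{1..m} - {i+2}. G (i+2) t)) \<ge> 0"
    by (rule alg[OF Gsym assms(7,8) key])
  then show ?thesis unfolding Qdelta_def G_def by simp
qed

end
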